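(* Let $M=(S,\mathrm{Act},P)$ be an MDP, $T\subseteq S$, $\mathrm{rew}\colon S\to\mathbb{R}_{\ge0}$, $\mathrm{opt}\in\{\min,\max\}$. Let $(x,r)\in[0,\infty]^S\times\mathbb{N}_\infty^S$ satisfy: (1) $\tilde D^{\overline{\mathrm{opt}}}(r)\le r$; (2) $x\le E^{\mathrm{opt}}(x)$; (3) for all $s\in S$, $x(s)=\infty$ implies $r(s)<\infty$ (inequalities pointwise). Then $\mathbb{E}^{\mathrm{opt}}_s(\Diamond T)\ge x(s)$ for all $s\in S$.
   Context: An MDP is a tuple $M=(S,\mathrm{Act},P)$ with $S$ finite, $\mathrm{Act}$ finite, $P\colon S\times\mathrm{Act}\times S\to[0,1]$ with $\sum_{s'}P(s,a,s')\in\{0,1\}$; $\mathrm{Act}(s)=\{a\mid\sum_{s'}P(s,a,s')=1\}$ is nonempty for all $s$; $\mathrm{Post}(s,a)=\{s'\mid P(s,a,s')>0\}$. A strategy is $\sigma\colon S\to\mathrm{Act}$ with $\sigma(s)\in\mathrm{Act}(s)$, inducing a Markov chain with transitions $P(s,\sigma(s),\cdot)$. $\overline{\min}=\max$, $\overline{\max}=\min$. For an infinite path $s_0s_1\ldots$, the accumulated reward is $\sum_{k=0}^{n-1}\mathrm{rew}(s_k)$ with $n=\min\{i\mid s_i\in T\}$ if $T$ is visited, and $\infty$ otherwise; $\mathbb{E}^\sigma_s(\Diamond T)$ is its expectation under $\sigma$ from $s$, $\mathbb{E}^{\mathrm{opt}}_s(\Diamond T)=\mathrm{opt}_\sigma\mathbb{E}^\sigma_s(\Diamond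 T)$. $E^{\mathrm{opt}}(x)(s)=0$ for $s\in T$ and $\mathrm{rew}(s)+\mathrm{opt}_{a\in\mathrm{Act}(s)}\sum_{s'\in\mathrm{Post}(s,a)}P(s,a,s')x(s')$ for $s\notin T$, with $p\cdot\infty=\infty$ for $p>0$, $a+\infty=\infty$. $\mathbb{N}_\infty=\mathbb{N}\cup\{\infty\}$. For $\mathrm{opt}'\in\{\min,\max\}$, the complementary distance operator is $\tilde D^{\mathrm{opt}'}(r)(s)=\infty$ for $s\in T$ and $\mathrm{opt}'_{a\in\mathrm{Act}(s)}\big(\min_{s'\in\mathrm{Post}(s,a)}r(s')+[\exists u,v\in\mathrm{Post}(s,a)\colon r(u)\ne r(v)]\big)$ for $s\notin T$, where $[\varphi]\in\{0,1\}$ is the Iverson bracket and $\infty+1=\infty$. *)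

theory Defs
  imports "HOL-Analysis.Analysis" "HOL-Library.Extended_Nat"
begin

text \<open>An MDP over a finite state type 's and finite action type 'a is given by
  its transition function P.  Act(s) = enabled actions.\<close>

definition enabled :: "('s::finite \<Rightarrow> 'a::finite \<Rightarrow> 's \<Rightarrow> real) \<Rightarrow> 's \<Rightarrow> 'a \<Rightarrow> bool" where
  "enabled P s a \<longleftrightarrow> (\<Sum>s'\<in>UNIV. P s a s') = 1"

definition Post :: "('s::finite \<Rightarrow> 'a::finite \<Rightarrow> 's \<Rightarrow> real) \<Rightarrow> 's \<Rightarrow> 'a \<Rightarrow> 's set" where
  "Post P s a = {s'. P s a s' > 0}"

definition is_mdp :: "('s::finite \<Rightarrow> 'a::finite \<Rightarrow> 's \<Rightarrow> real) \<Rightarrow> bool" where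
  "is_mdp P \<longleftrightarrow> (\<forall>s a s'. 0 \<le> P s a s' \<and> P s a s' \<le> 1)
     \<and> (\<forall>s a. (\<Sum>s'\<in>UNIV. P s a s') \<in> {0, 1})
     \<and> (\<forall>s. \<exists>a. enabled P s a)"

definition strategies :: "('s::finite \<Rightarrow> 'a::finite \<Rightarrow> 's \<Rightarrow> real) \<Rightarrow> ('s \<Rightarrow> 'a) set" where
  "strategies P = {\<sigma>. \<forall>s. enabled P s (\<sigma> s)}"

datatype opt = OMin | OMax

fun dual :: "opt \<Rightarrow> opt" where
  "dual OMin = OMax" | "dual OMax = OMin"

definition opt_over :: "opt \<Rightarrow> 'b set \<Rightarrow> ('b \<Rightarrow> 'c::complete_lattice) \<Rightarrow> 'c" where
  "opt_over o' A f = (case o' of OMin \<Rightarrow> (INF a\<in>A. f a) | OMax \<Rightarrow> (SUP a\<in>A. f a))"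

definition reach_paths :: "'s set \<Rightarrow> 's \<Rightarrow> 's list set" where
  "reach_paths T s = {p. p \<noteq> [] \<and> hd p = s \<and> last p \<in> T \<and> (\<forall>i < length p - 1. p ! i \<notin> T)}"

definition path_prob :: "('s \<Rightarrow> 'a \<Rightarrow> 's \<Rightarrow> real) \<Rightarrow> ('s \<Rightarrow> 'a) \<Rightarrow> 's list \<Rightarrow> real" where
  "path_prob P \<sigma> p = (\<Prod>i < length p - 1. P (p ! i) (\<sigma> (p ! i)) (p ! Suc i))"

definition path_rew :: "('s \<Rightarrow> real) \<Rightarrow> 's list \<Rightarrow> real" where
  "path_rew rew p = (\<Sum>i < length p - 1. rew (p ! i))"

definition reach_prob :: "('s::finite \<Rightarrow> 'a::finite \<Rightarrow> 's \<Rightarrow> real) \<Rightarrow> 's set \<Rightarrow> ('s \<Rightarrow> 'a) \<Rightarrow> 's \<Rightarrow> ennreal" where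
  "reach_prob P T \<sigma> s = (\<integral>\<^sup>+ p. ennreal (path_prob P \<sigma> p) \<partial>count_space (reach_paths T s))"

text \<open>Expected accumulated reward until reaching T (reward is \<infinity> on paths not
  visiting T, so the expectation is \<infinity> whenever T is missed with positive probability).\<close>
definition exp_rew :: "('s::finite \<Rightarrow> 'a::finite \<Rightarrow> 's \<Rightarrow> real) \<Rightarrow> 's set \<Rightarrow> ('s \<Rightarrow> real) \<Rightarrow> ('s \<Rightarrow> 'a) \<Rightarrow> 's \<Rightarrow> ennreal" where
  "exp_rew P T rew \<sigma> s =
     (if reach_prob P T \<sigma> s < 1 then \<infinity>
      else (\<integral>\<^sup>+ p. ennreal (path_prob P \<sigma> p) * ennreal (path_rew rew p) \<partial>count_space (reach_paths T s)))"

definition exp_opt :: "('s::finite \<Rightarrow> 'a::finite \<Rightarrow> 's \<Rightarrow> real) \<Rightarrow> 's set \<Rightarrow> ('s \<Rightarrow> real) \<Rightarrow> opt \<Rightarrow> 's \<Rightarrow> ennreal" where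
  "exp_opt P T rew o' s = opt_over o' (strategies P) (\<lambda>\<sigma>. exp_rew P T rew \<sigma> s)"

definition E_op :: "('s::finite \<Rightarrow> 'a::finite \<Rightarrow> 's \<Rightarrow> real) \<Rightarrow> 's set \<Rightarrow> ('s \<Rightarrow> real) \<Rightarrow> opt \<Rightarrow> ('s \<Rightarrow> ennreal) \<Rightarrow> 's \<Rightarrow> ennreal" where
  "E_op P T rew o' x s =
     (if s \<in> T then 0
      else ennreal (rew s) + opt_over o' {a. enabled P s a}
             (\<lambda>a. \<Sum>s'\<in>Post P s a. ennreal (P s a s') * x s'))"

definition D_op :: "('s::finite \<Rightarrow> 'a::finite \<Rightarrow> 's \<Rightarrow> real) \<Rightarrow> 's set \<Rightarrow> opt \<Rightarrow> ('s \<Rightarrow> enat) \<Rightarrow> 's \<Rightarrow> enat" where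
  "D_op P T o' r s =
     (if s \<in> T then \<infinity>
      else opt_over o' {a. enabled P s a}
             (\<lambda>a. Min (r ` Post P s a)
                  + (if \<exists>u\<in>Post P s a. \<exists>v\<in>Post P s a. r u \<noteq> r v then 1 else 0)))"

end

theory Submission
  imports Defs
begin

lemma mdp_nonneg: "is_mdp P \<Longrightarrow> 0 \<le> P s a s'"
  by (simp add: is_mdp_def)

lemma enabled_sum_Post:
  assumes "is_mdp P" "enabled P s a"
  shows "(\<Sum>s'\<in>Post P s a. P s a s') = 1"
proof -
  have "(\<Sum>s'\<in>Post P s a. P s a s') = (\<Sum>s'\<in>UNIV. P s a s')"
    by (rule sum.mono_neutral_left) (use mdp_nonneg[OF assms(1)] in \<open>auto simp: Post_def order.order_iff_strict\<close>)
  with assms show ?thesis by (simp add: enabled_def)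
qed

lemma enabled_Post_ne:
  assumes "is_mdp P" "enabled P s a"
  shows "Post P s a \<noteq> {}"
  using enabled_sum_Post[OF assms] by auto

lemma path_prob_Cons:
  "p \<noteq> [] \<Longrightarrow> path_prob P \<sigma> (s # p) = P s (\<sigma> s) (hd p) * path_prob P \<sigma> p"
  unfolding path_prob_def
  by (cases p) (simp_all del: prod.lessThan_Suc add: prod.lessThan_Suc_shift)

lemma path_rew_Cons:
  "p \<noteq> [] \<Longrightarrow> path_rew rew (s # p) = rew s + path_rew rew p"
  unfolding path_rew_def
  by (cases p) (simp_all del: sum.lessThan_Suc add: sum.lessThan_Suc_shift)

lemma path_prob_single[simp]: "path_prob P \<sigma> [s] = 1"
  by (simp add: path_prob_def)

lemma path_rew_single[simp]: "path_rew rew [s] = 0"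
  by (simp add: path_rew_def)

lemma path_prob_nonneg: "is_mdp P \<Longrightarrow> 0 \<le> path_prob P \<sigma> p"
  unfolding path_prob_def by (intro prod_nonneg) (auto intro: mdp_nonneg)

lemma path_rew_nonneg: "(\<And>s. 0 \<le> rew s) \<Longrightarrow> 0 \<le> path_rew rew p"
  unfolding path_rew_def by (intro sum_nonneg) auto

lemma reach_paths_T: assumes "s \<in> T" shows "reach_paths T s = {[s]}"
  unfolding reach_paths_def
proof (intro set_eqI iffI)
  fix p assume "p \<in> {p. p \<noteq> [] \<and> hd p = s \<and> last p \<in> T \<and> (\<forall>i<length p - 1. p ! i \<notin> T)}"
  then have p: "p \<noteq> []" "hd p = s" "\<forall>i<length p - 1. p ! i \<notin> T" by auto
  have "\<not> 0 < length p - 1" using p(3) \<open>s \<in> T\<close> hd_conv_nth[OF p(1)] p(2) by auto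
  then have "length p = 1" using p(1) by (cases p) auto
  then show "p \<in> {[s]}" using p by (cases p) auto
qed (use assms in auto)

lemma reach_paths_notT:
  assumes "s \<notin> T"
  shows "reach_paths T s = (\<Union>s'. Cons s ` reach_paths T s')"
proof (intro set_eqI iffI)
  fix p assume p: "p \<in> reach_paths T s"
  then obtain q where q: "p = s # q" unfolding reach_paths_def by (cases p) auto
  have "q \<noteq> []" using p q assms unfolding reach_paths_def by auto
  have "q \<in> reach_paths T (hd q)"
    unfolding reach_paths_def
  proof (intro CollectI conjI allI impI)
    show "last q \<in> T" using p q \<open>q \<noteq> []\<close> unfolding reach_paths_def by auto
    fix i assume "i < length q - 1"
    then have "Suc i < length p - 1" using q by auto
    then show "q ! i \<notin> T" using p q unfolding reach_paths_def by auto
  qed (use \<open>q \<noteq> []\<close> in auto)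
  then show "p \<in> (\<Union>s'. Cons s ` reach_paths T s')" using q by auto
next
  fix p assume "p \<in> (\<Union>s'. Cons s ` reach_paths T s')"
  then obtain s' q where q: "p = s # q" "q \<in> reach_paths T s'" by auto
  show "p \<in> reach_paths T s"
    unfolding reach_paths_def
  proof (intro CollectI conjI allI impI)
    show "last p \<in> T" using q unfolding reach_paths_def by auto
    fix i assume i: "i < length p - 1"
    show "p ! i \<notin> T"
    proof (cases i)
      case 0 then show ?thesis using q assms by simp
    next
      case (Suc j) then show ?thesis using q i unfolding reach_paths_def by auto
    qed
  qed (use q in auto)
qed

lemma decomp:
  assumes "s \<notin> T"
  shows "(\<integral>\<^sup>+ p. F p \<partial>count_space (reach_paths T s))
       = (\<Sum>s'\<in>(UNIV::'s::finite set). \<integral>\<^sup>+ p. F (s # p) \<partial>count_space (reach_paths T s'))"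
proof -
  have disj: "disjoint_family_on (\<lambda>s'. Cons s ` reach_paths T s') UNIV"
    unfolding disjoint_family_on_def reach_paths_def by auto
  have "(\<integral>\<^sup>+ p. F p \<partial>count_space (reach_paths T s))
      = (\<integral>\<^sup>+ p. F p * indicator (\<Union>s'. Cons s ` reach_paths T s') p \<partial>count_space UNIV)"
    unfolding reach_paths_notT[OF assms] by (rule nn_integral_count_space_indicator) simp
  also have "\<dots> = (\<integral>\<^sup>+ p. (\<Sum>s'\<in>UNIV. F p * indicator (Cons s ` reach_paths T s') p) \<partial>count_space UNIV)"
    by (intro nn_integral_cong) (simp add: indicator_UN_disjoint[OF _ disj] sum_distrib_left)
  also have "\<dots> = (\<Sum>s'\<in>UNIV. \<integral>\<^sup>+ p. F p * indicator (Cons s ` reach_paths T s') p \<partial>count_space UNIV)"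
    by (rule nn_integral_sum) simp
  also have "\<dots> = (\<Sum>s'\<in>UNIV. \<integral>\<^sup>+ p. F p \<partial>count_space (Cons s ` reach_paths T s'))"
    by (intro sum.cong refl nn_integral_count_space_indicator[symmetric]) simp
  also have "\<dots> = (\<Sum>s'\<in>UNIV. \<integral>\<^sup>+ p. F (s # p) \<partial>count_space (reach_paths T s'))"
    by (intro sum.cong refl nn_integral_bij_count_space[symmetric]) (auto simp: bij_betw_def)
  finally show ?thesis .
qed

definition Qv :: "('s::finite \<Rightarrow> 'a::finite \<Rightarrow> 's \<Rightarrow> real) \<Rightarrow> 's set \<Rightarrow> ('s \<Rightarrow> real) \<Rightarrow> ('s \<Rightarrow> 'a) \<Rightarrow> 's \<Rightarrow> ennreal" where
  "Qv P T rew \<sigma> s = (\<integral>\<^sup>+ p. ennreal (path_prob P \<sigma> p) * ennreal (path_rew rew p) \<partial>count_space (reach_paths T s))"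

lemma reach_T: "s \<in> T \<Longrightarrow> reach_prob P T \<sigma> s = 1"
  unfolding reach_prob_def by (simp add: reach_paths_T nn_integral_count_space_finite)

lemma Qv_T: "s \<in> T \<Longrightarrow> Qv P T rew \<sigma> s = 0"
  unfolding Qv_def by (simp add: reach_paths_T nn_integral_count_space_finite)

lemma reach_notT:
  assumes "is_mdp P" "s \<notin> T"
  shows "reach_prob P T \<sigma> s = (\<Sum>s'\<in>UNIV. ennreal (P s (\<sigma> s) s') * reach_prob P T \<sigma> s')"
proof -
  have "reach_prob P T \<sigma> s = (\<Sum>s'\<in>UNIV. \<integral>\<^sup>+ p. ennreal (path_prob P \<sigma> (s # p)) \<partial>count_space (reach_paths T s'))"
    unfolding reach_prob_def by (rule decomp[OF assms(2)])
  also have "\<dots> = (\<Sum>s'\<in>UNIV. \<integral>\<^sup>+ p. ennreal (P s (\<sigma> s) s') * ennreal (path_prob P \<sigma> p) \<partial>count_space (reach_paths T s'))"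
    by (intro sum.cong refl nn_integral_cong)
       (auto simp: reach_paths_def path_prob_Cons ennreal_mult mdp_nonneg[OF assms(1)] path_prob_nonneg[OF assms(1)])
  also have "\<dots> = (\<Sum>s'\<in>UNIV. ennreal (P s (\<sigma> s) s') * reach_prob P T \<sigma> s')"
    unfolding reach_prob_def by (intro sum.cong refl nn_integral_cmult) simp
  finally show ?thesis .
qed

lemma ennreal_aux:
  fixes a b c d :: real
  assumes "0 \<le> a" "0 \<le> b" "0 \<le> c" "0 \<le> d"
  shows "ennreal (a*b) * (ennreal c + ennreal d) = ennreal a * (ennreal c * ennreal b + ennreal b * ennreal d)"
proof -
  have "ennreal (a*b) * (ennreal c + ennreal d) = ennreal (a*(c*b + b*d))"
    using assms by (simp del: ennreal_plus add: ennreal_plus[symmetric] ennreal_mult[symmetric] algebra_simps)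
  also have "\<dots> = ennreal a * (ennreal c * ennreal b + ennreal b * ennreal d)"
    using assms by (simp add: ennreal_mult ennreal_plus)
  finally show ?thesis .
qed

lemma Qv_notT:
  assumes "is_mdp P" "s \<notin> T" "\<And>s. 0 \<le> rew s"
  shows "Qv P T rew \<sigma> s = (\<Sum>s'\<in>UNIV. ennreal (P s (\<sigma> s) s') *
            (ennreal (rew s) * reach_prob P T \<sigma> s' + Qv P T rew \<sigma> s'))"
proof -
  have "Qv P T rew \<sigma> s = (\<Sum>s'\<in>UNIV. \<integral>\<^sup>+ p. ennreal (path_prob P \<sigma> (s # p)) * ennreal (path_rew rew (s # p)) \<partial>count_space (reach_paths T s'))"
    unfolding Qv_def by (rule decomp[OF assms(2)])
  also have "\<dots> = (\<Sum>s'\<in>UNIV. \<integral>\<^sup>+ p. ennreal (P s (\<sigma> s) s') * (ennreal (rew s) * ennreal (path_prob P \<sigma> p)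
        + ennreal (path_prob P \<sigma> p) * ennreal (path_rew rew p)) \<partial>count_space (reach_paths T s'))"
    by (intro sum.cong refl nn_integral_cong)
       (auto simp: reach_paths_def path_prob_Cons path_rew_Cons
         mdp_nonneg[OF assms(1)] path_prob_nonneg[OF assms(1)] path_rew_nonneg assms(3) ennreal_aux)
  also have "\<dots> = (\<Sum>s'\<in>UNIV. ennreal (P s (\<sigma> s) s') *
            (ennreal (rew s) * reach_prob P T \<sigma> s' + Qv P T rew \<sigma> s'))"
    unfolding reach_prob_def Qv_def
    by (intro sum.cong refl) (simp add: nn_integral_cmult nn_integral_add)
  finally show ?thesis .
qed

lemma reach_le_1:
  assumes "is_mdp P" "\<sigma> \<in> strategies P"
  shows "reach_prob P T \<sigma> s \<le> 1"
proof -
  define F where "F n p = ennreal (path_prob P \<sigma> p) * (if length p \<le> Suc n then 1 else 0)" for n p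
  have bound: "\<forall>s. (\<integral>\<^sup>+ p. F n p \<partial>count_space (reach_paths T s)) \<le> 1" for n
  proof (induction n)
    case 0
    show ?case
    proof
      fix s show "(\<integral>\<^sup>+ p. F 0 p \<partial>count_space (reach_paths T s)) \<le> 1"
      proof (cases "s \<in> T")
        case True then show ?thesis by (simp add: reach_paths_T nn_integral_count_space_finite F_def)
      next
        case False
        have "(\<integral>\<^sup>+ p. F 0 p \<partial>count_space (reach_paths T s)) = 0"
          unfolding decomp[OF False]
        proof (intro sum.neutral ballI)
          fix s' show "(\<integral>\<^sup>+ p. F 0 (s # p) \<partial>count_space (reach_paths T s')) = 0"
            by (subst nn_integral_cong[where v="\<lambda>_. 0"]) (auto simp: F_def reach_paths_def)
        qed
        then show ?thesis by simp
      qed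
    qed
  next
    case (Suc n)
    show ?case
    proof
      fix s show "(\<integral>\<^sup>+ p. F (Suc n) p \<partial>count_space (reach_paths T s)) \<le> 1"
      proof (cases "s \<in> T")
        case True then show ?thesis by (simp add: reach_paths_T nn_integral_count_space_finite F_def)
      next
        case False
        have "(\<integral>\<^sup>+ p. F (Suc n) p \<partial>count_space (reach_paths T s))
           = (\<Sum>s'\<in>UNIV. \<integral>\<^sup>+ p. F (Suc n) (s # p) \<partial>count_space (reach_paths T s'))"
          by (rule decomp[OF False])
        also have "\<dots> = (\<Sum>s'\<in>UNIV. \<integral>\<^sup>+ p. ennreal (P s (\<sigma> s) s') * F n p \<partial>count_space (reach_paths T s'))"
          by (intro sum.cong refl nn_integral_cong)
            (auto simp: F_def reach_paths_def path_prob_Cons ennreal_mult mdp_nonneg[OF assms(1)] path_prob_nonneg[OF assms(1)])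
        also have "\<dots> = (\<Sum>s'\<in>UNIV. ennreal (P s (\<sigma> s) s') * (\<integral>\<^sup>+ p. F n p \<partial>count_space (reach_paths T s')))"
          by (intro sum.cong refl nn_integral_cmult) simp
        also have "\<dots> \<le> (\<Sum>s'\<in>UNIV. ennreal (P s (\<sigma> s) s') * 1)"
          by (intro sum_mono mult_left_mono) (use Suc in auto)
        also have "\<dots> = ennreal (\<Sum>s'\<in>UNIV. P s (\<sigma> s) s')"
          by (simp add: sum_ennreal mdp_nonneg[OF assms(1)])
        also have "\<dots> = 1" using assms(2) by (simp add: strategies_def enabled_def)
        finally show ?thesis .
      qed
    qed
  qed
  have inc: "incseq F"
    by (auto simp: incseq_def le_fun_def F_def intro!: mult_left_mono)
  have sup: "(SUP n. F n p) = ennreal (path_prob P \<sigma> p)" for p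
  proof (rule antisym)
    show "(SUP n. F n p) \<le> ennreal (path_prob P \<sigma> p)"
      by (rule SUP_least) (auto simp: F_def)
    show "ennreal (path_prob P \<sigma> p) \<le> (SUP n. F n p)"
      by (rule SUP_upper2[where i="length p"]) (auto simp: F_def)
  qed
  have "reach_prob P T \<sigma> s = (\<integral>\<^sup>+ p. (SUP n. F n p) \<partial>count_space (reach_paths T s))"
    unfolding reach_prob_def sup ..
  also have "\<dots> = (SUP n. \<integral>\<^sup>+ p. F n p \<partial>count_space (reach_paths T s))"
    by (rule nn_integral_monotone_convergence_SUP[OF inc]) simp
  also have "\<dots> \<le> 1" using bound by (auto intro!: SUP_least)
  finally show ?thesis .
qed

definition succ :: "('s \<Rightarrow> 'a \<Rightarrow> 's \<Rightarrow> real) \<Rightarrow> 's set \<Rightarrow> ('s \<Rightarrow> 'a) \<Rightarrow> 's \<Rightarrow> 's \<Rightarrow> bool" where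
  "succ P T \<sigma> u v \<longleftrightarrow> u \<notin> T \<and> 0 < P u (\<sigma> u) v"

lemma reach_real:
  assumes "is_mdp P" "\<sigma> \<in> strategies P" "s \<notin> T"
  shows "enn2real (reach_prob P T \<sigma> s) = (\<Sum>s'\<in>UNIV. P s (\<sigma> s) s' * enn2real (reach_prob P T \<sigma> s'))"
proof -
  have fin: "reach_prob P T \<sigma> s' = ennreal (enn2real (reach_prob P T \<sigma> s'))" for s'
    using reach_le_1[OF assms(1,2), of T s'] by (simp add: ennreal_enn2real_if top_unique)
           (metis ennreal_enn2real_if ennreal_one_less_top leD)
  have "enn2real (reach_prob P T \<sigma> s) = enn2real (\<Sum>s'\<in>UNIV. ennreal (P s (\<sigma> s) s' * enn2real (reach_prob P T \<sigma> s')))"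
    unfolding reach_notT[OF assms(1,3)]
    by (subst fin) (simp add: ennreal_mult mdp_nonneg[OF assms(1)])
  also have "\<dots> = (\<Sum>s'\<in>UNIV. P s (\<sigma> s) s' * enn2real (reach_prob P T \<sigma> s'))"
  proof -
    have nn: "0 \<le> P s (\<sigma> s) s' * enn2real (reach_prob P T \<sigma> s')" for s'
      by (simp add: mdp_nonneg[OF assms(1)])
    show ?thesis by (subst sum_ennreal) (auto simp: nn sum_nonneg enn2real_ennreal simp del: sum_ennreal)
  qed
  finally show ?thesis .
qed

lemma reach_prop_step:
  assumes "is_mdp P" "\<sigma> \<in> strategies P" "reach_prob P T \<sigma> u = 1" "succ P T \<sigma> u v"
  shows "reach_prob P T \<sigma> v = 1"
proof (rule ccontr)
  assume ne: "reach_prob P T \<sigma> v \<noteq> 1"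
  let ?f = "\<lambda>s'. enn2real (reach_prob P T \<sigma> s')"
  have le1: "?f s' \<le> 1" for s'
    using reach_le_1[OF assms(1,2), of T s'] by (simp add: enn2real_leI)
  have "?f v \<noteq> 1"
    using ne reach_le_1[OF assms(1,2), of T v]
    by (metis ennreal_enn2real_if ennreal_one_less_top ennreal_1 leD top.not_eq_extremum)
  then have vlt: "?f v < 1" using le1[of v] by linarith
  have uT: "u \<notin> T" and pos: "0 < P u (\<sigma> u) v" using assms(4) by (auto simp: succ_def)
  have "1 = ?f u" using assms(3) by simp
  also have "\<dots> = (\<Sum>s'\<in>UNIV. P u (\<sigma> u) s' * ?f s')" by (rule reach_real[OF assms(1,2) uT])
  also have "\<dots> < (\<Sum>s'\<in>UNIV. P u (\<sigma> u) s' * 1)"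
  proof (rule sum_strict_mono_ex1)
    show "\<forall>x\<in>UNIV. P u (\<sigma> u) x * ?f x \<le> P u (\<sigma> u) x * 1"
      using le1 mdp_nonneg[OF assms(1)] by (simp add: mult_left_le)
    show "\<exists>a\<in>UNIV. P u (\<sigma> u) a * ?f a < P u (\<sigma> u) a * 1"
      using pos vlt by (intro bexI[of _ v]) auto
  qed simp
  also have "\<dots> = 1" using assms(2) by (simp add: strategies_def enabled_def)
  finally show False by simp
qed

lemma reach_prop:
  assumes "is_mdp P" "\<sigma> \<in> strategies P" "reach_prob P T \<sigma> s = 1" "(succ P T \<sigma>)\<^sup>*\<^sup>* s c"
  shows "reach_prob P T \<sigma> c = 1"
  using assms(4) by induction (use assms reach_prop_step in auto)

lemma closed_reach0:
  assumes "is_mdp P" "\<And>u v. u \<in> M \<Longrightarrow> succ P T \<sigma> u v \<Longrightarrow> v \<in> M" "M \<inter> T = {}" "c \<in> M"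
  shows "reach_prob P T \<sigma> c = 0"
  unfolding reach_prob_def
proof (subst nn_integral_cong[where v="\<lambda>_. 0"])
  fix p assume "p \<in> space (count_space (reach_paths T c))"
  then have p: "p \<noteq> []" "hd p = c" "last p \<in> T" "\<forall>i<length p - 1. p ! i \<notin> T"
    by (auto simp: reach_paths_def)
  show "ennreal (path_prob P \<sigma> p) = 0"
  proof (rule ccontr)
    assume "ennreal (path_prob P \<sigma> p) \<noteq> 0"
    then have "path_prob P \<sigma> p \<noteq> 0" by auto
    then have nz: "\<forall>i<length p - 1. P (p ! i) (\<sigma> (p ! i)) (p ! Suc i) \<noteq> 0"
      unfolding path_prob_def by (simp add: prod_zero_iff)
    have "\<forall>i<length p. p ! i \<in> M"
    proof (intro allI impI)
      fix i assume "i < length p"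
      then show "p ! i \<in> M"
      proof (induction i)
        case 0 then show ?case using p assms(4) by (simp add: hd_conv_nth)
      next
        case (Suc i)
        then have "p ! i \<in> M" by simp
        moreover have "succ P T \<sigma> (p ! i) (p ! Suc i)"
        proof -
          have i: "i < length p - 1" using Suc.prems by simp
          then have "P (p ! i) (\<sigma> (p ! i)) (p ! Suc i) \<noteq> 0" using nz by simp
          moreover have "0 \<le> P (p ! i) (\<sigma> (p ! i)) (p ! Suc i)" by (rule mdp_nonneg[OF assms(1)])
          ultimately show ?thesis using p(4) i by (auto simp: succ_def)
        qed
        ultimately show ?case using assms(2) by blast
      qed
    qed
    then have "last p \<in> M" using p(1) by (simp add: last_conv_nth)
    then show False using p(3) assms(3) by auto
  qed
qed simp


lemma R_miss:
  fixes r :: "'s::finite \<Rightarrow> enat"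
  assumes mdp: "is_mdp P" and str: "\<sigma> \<in> strategies P"
    and RT: "\<And>s. r s < \<infinity> \<Longrightarrow> s \<notin> T"
    and H1: "\<And>s. r s < \<infinity> \<Longrightarrow> Min (r ` Post P s (\<sigma> s))
        + (if \<exists>u\<in>Post P s (\<sigma> s). \<exists>v\<in>Post P s (\<sigma> s). r u \<noteq> r v then 1 else 0) \<le> r s"
    and s: "r s < \<infinity>"
  shows "reach_prob P T \<sigma> s < 1"
proof (rule ccontr)
  assume "\<not> reach_prob P T \<sigma> s < 1"
  then have r1: "reach_prob P T \<sigma> s = 1" using reach_le_1[OF mdp str, of T s] by simp
  define C where "C = {v. (succ P T \<sigma>)\<^sup>*\<^sup>* s v \<and> r v < \<infinity>}"
  have sC: "s \<in> C" using s by (simp add: C_def)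
  have finC: "finite C" by simp
  define j where "j = Min (r ` C)"
  define M where "M = {v\<in>C. r v = j}"
  have jC: "j \<in> r ` C" unfolding j_def using sC by (intro Min_in) auto
  then obtain c where cM: "c \<in> M" by (auto simp: M_def)
  have jle: "j \<le> r v" if "v \<in> C" for v unfolding j_def using that by simp
  have closed: "v \<in> M" if uM: "u \<in> M" and suv: "succ P T \<sigma> u v" for u v
  proof -
    have uC: "u \<in> C" and ru: "r u = j" using uM by (auto simp: M_def)
    then have rufin: "r u < \<infinity>" by (simp add: C_def)
    let ?Po = "Post P u (\<sigma> u)"
    have en: "enabled P u (\<sigma> u)" using str by (simp add: strategies_def)
    have Pne: "?Po \<noteq> {}" by (rule enabled_Post_ne[OF mdp en])
    have finPo: "finite ?Po" by simp
    define mn where "mn = Min (r ` ?Po)"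
    have "mn \<in> r ` ?Po" unfolding mn_def using Pne by (intro Min_in) auto
    then obtain w0 where w0: "w0 \<in> ?Po" "r w0 = mn" by auto
    have h1: "mn + (if \<exists>u'\<in>?Po. \<exists>v'\<in>?Po. r u' \<noteq> r v' then 1 else 0) \<le> j"
      using H1[OF rufin] ru by (simp add: mn_def)
    have "mn \<le> mn + (if \<exists>u'\<in>?Po. \<exists>v'\<in>?Po. r u' \<noteq> r v' then 1 else 0)" by simp
    then have "mn \<le> j" using h1 by (rule order_trans)
    then have "mn < \<infinity>" using rufin ru by (metis order.strict_trans1)
    have "succ P T \<sigma> u w0" using w0 RT[OF rufin] by (simp add: succ_def Post_def)
    then have "(succ P T \<sigma>)\<^sup>*\<^sup>* s w0" using uC unfolding C_def by (blast intro: rtranclp.rtrancl_into_rtrancl)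
    then have "w0 \<in> C" using \<open>mn < \<infinity>\<close> w0 unfolding C_def by simp
    then have "j \<le> r w0" by (rule jle)
    then have "j \<le> mn" using w0(2) by simp
    then have mnj: "mn = j" using \<open>mn \<le> j\<close> by simp
    have const: "\<not> (\<exists>u'\<in>?Po. \<exists>v'\<in>?Po. r u' \<noteq> r v')"
    proof
      assume "\<exists>u'\<in>?Po. \<exists>v'\<in>?Po. r u' \<noteq> r v'"
      then have "mn + 1 \<le> mn" using h1 mnj by simp
      then show False using \<open>mn < \<infinity>\<close> by (cases mn) auto
    qed
    have vPo: "v \<in> ?Po" using suv by (simp add: succ_def Post_def)
    then have "r v = r w0" using const w0(1) by blast
    then have "r v = j" using w0(2) mnj by simp
    moreover have "(succ P T \<sigma>)\<^sup>*\<^sup>* s v" using uC suv unfolding C_def by (blast intro: rtranclp.rtrancl_into_rtrancl)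
    moreover have "v \<in> C" using calculation \<open>mn < \<infinity>\<close> mnj unfolding C_def by simp
    ultimately show ?thesis by (simp add: M_def)
  qed
  have MT: "M \<inter> T = {}" using RT by (auto simp: M_def C_def)
  have "reach_prob P T \<sigma> c = 0" by (rule closed_reach0[OF mdp _ MT cM]) (use closed in blast)
  moreover have "reach_prob P T \<sigma> c = 1"
    using reach_prop[OF mdp str r1] cM by (auto simp: M_def C_def)
  ultimately show False by simp
qed


lemma Qv_fin_step:
  assumes mdp: "is_mdp P" and rew: "\<And>s. 0 \<le> rew s"
    and u: "Qv P T rew \<sigma> u < \<infinity>" and suv: "succ P T \<sigma> u v"
  shows "Qv P T rew \<sigma> v < \<infinity>"
proof (rule ccontr)
  assume "\<not> Qv P T rew \<sigma> v < \<infinity>"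
  then have vtop: "Qv P T rew \<sigma> v = \<infinity>" by (simp add: less_top[symmetric])
  have uT: "u \<notin> T" and pos: "0 < P u (\<sigma> u) v" using suv by (auto simp: succ_def)
  have "\<infinity> = ennreal (P u (\<sigma> u) v) * (ennreal (rew u) * reach_prob P T \<sigma> v + Qv P T rew \<sigma> v)"
    using vtop pos by (simp add: ennreal_mult_eq_top_iff)
  also have "\<dots> \<le> (\<Sum>s'\<in>UNIV. ennreal (P u (\<sigma> u) s') * (ennreal (rew u) * reach_prob P T \<sigma> s' + Qv P T rew \<sigma> s'))"
    by (rule member_le_sum) auto
  also have "\<dots> = Qv P T rew \<sigma> u" by (rule Qv_notT[OF mdp uT rew, symmetric])
  finally show False using u by (simp add: top_unique)
qed

lemma core:
  fixes r :: "'s::finite \<Rightarrow> enat" and x :: "'s \<Rightarrow> ennreal"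
  assumes mdp: "is_mdp P" and str: "\<sigma> \<in> strategies P" and rew: "\<And>s. 0 \<le> rew s"
    and RT: "\<And>s. r s < \<infinity> \<Longrightarrow> s \<notin> T"
    and H1: "\<And>s. r s < \<infinity> \<Longrightarrow> Min (r ` Post P s (\<sigma> s))
        + (if \<exists>u\<in>Post P s (\<sigma> s). \<exists>v\<in>Post P s (\<sigma> s). r u \<noteq> r v then 1 else 0) \<le> r s"
    and H0: "\<And>s. s \<in> T \<Longrightarrow> x s = 0"
    and H2: "\<And>s. r s = \<infinity> \<Longrightarrow> s \<notin> T \<Longrightarrow>
               x s \<le> ennreal (rew s) + (\<Sum>s'\<in>Post P s (\<sigma> s). ennreal (P s (\<sigma> s) s') * x s')"
    and H3: "\<And>s. x s = \<infinity> \<Longrightarrow> r s < \<infinity>"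
  shows "x s \<le> exp_rew P T rew \<sigma> s"
proof (cases "reach_prob P T \<sigma> s < 1")
  case True then show ?thesis by (simp add: exp_rew_def)
next
  case False
  then have r1: "reach_prob P T \<sigma> s = 1" using reach_le_1[OF mdp str, of T s] by simp
  have er: "exp_rew P T rew \<sigma> s = Qv P T rew \<sigma> s" using r1 by (simp add: exp_rew_def Qv_def)
  show ?thesis
  proof (cases "Qv P T rew \<sigma> s < \<infinity>")
    case False then show ?thesis by (simp add: er less_top[symmetric])
  next
    case Qfin: True
    define C where "C = {c. (succ P T \<sigma>)\<^sup>*\<^sup>* s c}"
    have sC: "s \<in> C" by (simp add: C_def)
    have succC: "v \<in> C" if "u \<in> C" "succ P T \<sigma> u v" for u v
      using that unfolding C_def by (blast intro: rtranclp.rtrancl_into_rtrancl)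
    have reachC: "reach_prob P T \<sigma> c = 1" if "c \<in> C" for c
      using reach_prop[OF mdp str r1] that by (simp add: C_def)
    have rC: "r c = \<infinity>" if "c \<in> C" for c
    proof (rule ccontr)
      assume "r c \<noteq> \<infinity>"
      then have "r c < \<infinity>" by (simp add: less_top[symmetric])
      then have "reach_prob P T \<sigma> c < 1" using R_miss[of P \<sigma> r T c] mdp str RT H1 by blast
      then show False using reachC[OF that] by simp
    qed
    have xC: "x c < \<infinity>" if "c \<in> C" for c
      using H3[of c] rC[OF that] by (auto simp: less_top[symmetric])
    have QC: "Qv P T rew \<sigma> c < \<infinity>" if "c \<in> C" for c
    proof -
      have "(succ P T \<sigma>)\<^sup>*\<^sup>* s c" using that by (simp add: C_def)
      then show ?thesis
      proof induction
        case base then show ?case by (rule Qfin)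
      next
        case (step y z) then show ?case using Qv_fin_step[of P rew T \<sigma> y z] mdp rew by blast
      qed
    qed
    define X where "X c = enn2real (x c)" for c
    define Y where "Y c = enn2real (Qv P T rew \<sigma> c)" for c
    have Xe: "x c = ennreal (X c)" if "c \<in> C" for c
      using xC[OF that] by (simp add: X_def ennreal_enn2real_if top.not_eq_extremum)
    have Ye: "Qv P T rew \<sigma> c = ennreal (Y c)" if "c \<in> C" for c
      using QC[OF that] by (simp add: Y_def ennreal_enn2real_if top.not_eq_extremum)
    have X0: "X c \<ge> 0" for c by (simp add: X_def)
    have Y0: "Y c \<ge> 0" for c by (simp add: Y_def)
    have PostC: "v \<in> C" if "c \<in> C" "c \<notin> T" "v \<in> Post P c (\<sigma> c)" for c v
      using that succC by (auto simp: succ_def Post_def)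
    have en: "enabled P c (\<sigma> c)" for c using str by (simp add: strategies_def)
    have sumPost: "(\<Sum>s'\<in>Post P c (\<sigma> c). P c (\<sigma> c) s') = 1" for c
      by (rule enabled_sum_Post[OF mdp en])
    have Pnn: "0 \<le> P a b d" for a b d by (rule mdp_nonneg[OF mdp])
    have Xineq: "X c \<le> rew c + (\<Sum>s'\<in>Post P c (\<sigma> c). P c (\<sigma> c) s' * X s')"
      if "c \<in> C" "c \<notin> T" for c
    proof -
      have "ennreal (X c) \<le> ennreal (rew c) + (\<Sum>s'\<in>Post P c (\<sigma> c). ennreal (P c (\<sigma> c) s') * ennreal (X s'))"
        using H2[OF rC[OF that(1)] that(2)] Xe[OF that(1)] Xe[OF PostC[OF that]]
        by (metis (no_types, lifting) sum.cong)
      also have "\<dots> = ennreal (rew c + (\<Sum>s'\<in>Post P c (\<sigma> c). P c (\<sigma> c) s' * X s'))"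
      proof -
        have "(\<Sum>s'\<in>Post P c (\<sigma> c). ennreal (P c (\<sigma> c) s') * ennreal (X s'))
            = (\<Sum>s'\<in>Post P c (\<sigma> c). ennreal (P c (\<sigma> c) s' * X s'))"
          using X0 Pnn by (simp add: ennreal_mult)
        also have "\<dots> = ennreal (\<Sum>s'\<in>Post P c (\<sigma> c). P c (\<sigma> c) s' * X s')"
          using X0 Pnn by (intro sum_ennreal) simp
        finally show ?thesis using rew X0 Pnn by (simp add: sum_nonneg)
      qed
      finally show ?thesis
        using rew X0 Pnn by (subst (asm) ennreal_le_iff) (auto intro!: add_nonneg_nonneg sum_nonneg)
    qed
    have Yeq: "Y c = rew c + (\<Sum>s'\<in>Post P c (\<sigma> c). P c (\<sigma> c) s' * Y s')"
      if "c \<in> C" "c \<notin> T" for c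
    proof -
      have "Qv P T rew \<sigma> c = (\<Sum>s'\<in>UNIV. ennreal (P c (\<sigma> c) s') *
            (ennreal (rew c) * reach_prob P T \<sigma> s' + Qv P T rew \<sigma> s'))"
        by (rule Qv_notT[OF mdp that(2) rew])
      also have "\<dots> = (\<Sum>s'\<in>Post P c (\<sigma> c). ennreal (P c (\<sigma> c) s') *
            (ennreal (rew c) * reach_prob P T \<sigma> s' + Qv P T rew \<sigma> s'))"
        by (rule sum.mono_neutral_right) (auto simp: Post_def not_less ennreal_neg)
      also have "\<dots> = (\<Sum>s'\<in>Post P c (\<sigma> c). ennreal (P c (\<sigma> c) s' * rew c + P c (\<sigma> c) s' * Y s'))"
      proof (rule sum.cong[OF refl])
        fix s' assume s': "s' \<in> Post P c (\<sigma> c)"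
        have "s' \<in> C" by (rule PostC[OF that s'])
        then show "ennreal (P c (\<sigma> c) s') * (ennreal (rew c) * reach_prob P T \<sigma> s' + Qv P T rew \<sigma> s')
            = ennreal (P c (\<sigma> c) s' * rew c + P c (\<sigma> c) s' * Y s')"
          using reachC Ye rew Y0 Pnn
          by (simp add: ennreal_mult ennreal_plus distrib_left)
      qed
      also have "\<dots> = ennreal (\<Sum>s'\<in>Post P c (\<sigma> c). P c (\<sigma> c) s' * rew c + P c (\<sigma> c) s' * Y s')"
        using rew Y0 Pnn by (intro sum_ennreal) (auto intro!: add_nonneg_nonneg)
      also have "(\<Sum>s'\<in>Post P c (\<sigma> c). P c (\<sigma> c) s' * rew c + P c (\<sigma> c) s' * Y s')
          = rew c + (\<Sum>s'\<in>Post P c (\<sigma> c). P c (\<sigma> c) s' * Y s')"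
        by (simp add: sum.distrib sum_distrib_right[symmetric] sumPost)
      finally have "ennreal (Y c) = ennreal (rew c + (\<Sum>s'\<in>Post P c (\<sigma> c). P c (\<sigma> c) s' * Y s'))"
        using Ye[OF that(1)] by simp
      then show ?thesis
        using rew Y0 Pnn by (subst (asm) ennreal_inj) (auto intro!: add_nonneg_nonneg sum_nonneg)
    qed
    define d where "d c = X c - Y c" for c
    have dle: "d s \<le> 0"
    proof (rule ccontr)
      assume "\<not> d s \<le> 0"
      then have ds: "d s > 0" by simp
      have finC: "finite C" by simp
      define m where "m = Max (d ` C)"
      have mge: "d c \<le> m" if "c \<in> C" for c unfolding m_def using that by simp
      have mpos: "m > 0" using mge[OF sC] ds by simp
      define M where "M = {c\<in>C. d c = m}"
      have "m \<in> d ` C" unfolding m_def using sC by (intro Min_in Max_in) auto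
      then obtain c0 where c0: "c0 \<in> M" by (auto simp: M_def)
      have MT: "M \<inter> T = {}"
      proof (rule ccontr)
        assume "M \<inter> T \<noteq> {}"
        then obtain c where c: "c \<in> M" "c \<in> T" by auto
        have "X c = 0" using H0[OF c(2)] by (simp add: X_def)
        moreover have "Y c = 0" using Qv_T[OF c(2), where P=P and rew=rew and \<sigma>=\<sigma>] by (simp add: Y_def)
        ultimately show False using c mpos by (simp add: M_def d_def)
      qed
      have closed: "v \<in> M" if uM: "u \<in> M" and suv: "succ P T \<sigma> u v" for u v
      proof (rule ccontr)
        assume vM: "v \<notin> M"
        have uC: "u \<in> C" and du: "d u = m" using uM by (auto simp: M_def)
        have uT: "u \<notin> T" using suv by (simp add: succ_def)
        have vPo: "v \<in> Post P u (\<sigma> u)" using suv by (simp add: succ_def Post_def)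
        have vC: "v \<in> C" by (rule succC[OF uC suv])
        have dv: "d v < m" using vM vC mge[OF vC] by (auto simp: M_def)
        have "m = d u" using du by simp
        also have "\<dots> \<le> (\<Sum>s'\<in>Post P u (\<sigma> u). P u (\<sigma> u) s' * d s')"
          using Xineq[OF uC uT] Yeq[OF uC uT]
          by (simp add: d_def right_diff_distrib sum_subtractf)
        also have "\<dots> < (\<Sum>s'\<in>Post P u (\<sigma> u). P u (\<sigma> u) s' * m)"
        proof (rule sum_strict_mono_ex1)
          show "\<forall>x\<in>Post P u (\<sigma> u). P u (\<sigma> u) x * d x \<le> P u (\<sigma> u) x * m"
            using PostC[OF uC uT] mge Pnn by (auto intro: mult_left_mono)
          show "\<exists>a\<in>Post P u (\<sigma> u). P u (\<sigma> u) a * d a < P u (\<sigma> u) a * m"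
            using vPo dv by (intro bexI[of _ v]) (auto simp: Post_def)
        qed simp
        also have "\<dots> = m" by (simp add: sum_distrib_right[symmetric] sumPost)
        finally show False by simp
      qed
      have "reach_prob P T \<sigma> c0 = 0" by (rule closed_reach0[OF mdp _ MT c0]) (use closed in blast)
      moreover have "reach_prob P T \<sigma> c0 = 1" using reachC c0 by (simp add: M_def)
      ultimately show False by simp
    qed
    then have "X s \<le> Y s" by (simp add: d_def)
    then have "x s \<le> Qv P T rew \<sigma> s" using Xe[OF sC] Ye[OF sC] by (simp add: ennreal_leI)
    then show ?thesis by (simp add: er)
  qed
qed


lemma INF_attained:
  fixes f :: "'b \<Rightarrow> 'c::complete_linorder"
  assumes "finite A" "A \<noteq> {}"
  shows "\<exists>a\<in>A. (INF a\<in>A. f a) = f a"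
proof -
  have "(INF a\<in>A. f a) = Min (f ` A)" using assms by (simp add: Min_Inf)
  moreover have "Min (f ` A) \<in> f ` A" using assms by (intro Min_in) auto
  ultimately show ?thesis by auto
qed

lemma SUP_attained:
  fixes f :: "'b \<Rightarrow> 'c::complete_linorder"
  assumes "finite A" "A \<noteq> {}"
  shows "\<exists>a\<in>A. (SUP a\<in>A. f a) = f a"
proof -
  have "(SUP a\<in>A. f a) = Max (f ` A)" using assms by (simp add: Max_Sup)
  moreover have "Max (f ` A) \<in> f ` A" using assms by (intro Max_in) auto
  ultimately show ?thesis by auto
qed

theorem proposition7:
  fixes P :: "'s::finite \<Rightarrow> 'a::finite \<Rightarrow> 's \<Rightarrow> real"
    and T :: "'s set" and rew :: "'s \<Rightarrow> real" and o' :: opt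
    and x :: "'s \<Rightarrow> ennreal" and r :: "'s \<Rightarrow> enat"
  assumes "is_mdp P"
    and "\<And>s. rew s \<ge> 0"
    and "\<And>s. D_op P T (dual o') r s \<le> r s"
    and "\<And>s. x s \<le> E_op P T rew o' x s"
    and "\<And>s. x s = \<infinity> \<Longrightarrow> r s < \<infinity>"
  shows "\<forall>s. exp_opt P T rew o' s \<ge> x s"
proof
  fix s0
  note mdp = assms(1) and rew = assms(2) and H3 = assms(5)
  define f where "f s a = Min (r ` Post P s a)
        + (if \<exists>u\<in>Post P s a. \<exists>v\<in>Post P s a. r u \<noteq> r v then 1 else 0)" for s a
  define g where "g s a = (\<Sum>s'\<in>Post P s a. ennreal (P s a s') * x s')" for s a
  have RT: "s \<notin> T" if "r s < \<infinity>" for s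
  proof
    assume "s \<in> T"
    then have "D_op P T (dual o') r s = \<infinity>" by (simp add: D_op_def)
    then show False using assms(3)[of s] that by simp
  qed
  have H0: "x s = 0" if "s \<in> T" for s
    using assms(4)[of s] that by (simp add: E_op_def)
  have Dn: "D_op P T o'' r s = opt_over o'' {a. enabled P s a} (f s)" if "s \<notin> T" for s o''
    using that by (simp add: D_op_def f_def[abs_def])
  have En: "E_op P T rew o' x s = ennreal (rew s) + opt_over o' {a. enabled P s a} (g s)" if "s \<notin> T" for s
    using that by (simp add: E_op_def g_def[abs_def])
  have Ane: "{a. enabled P s a} \<noteq> {}" for s using mdp by (auto simp: is_mdp_def)
  show "x s0 \<le> exp_opt P T rew o' s0"
  proof (cases o')
    case OMin
    have "x s0 \<le> exp_rew P T rew \<sigma> s0" if str: "\<sigma> \<in> strategies P" for \<sigma>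
    proof (rule core[OF mdp str rew RT _ H0 _ H3])
      fix s assume rs: "r s < \<infinity>"
      have "f s (\<sigma> s) \<le> (SUP a\<in>{a. enabled P s a}. f s a)"
        using str by (intro SUP_upper) (simp add: strategies_def)
      also have "\<dots> = D_op P T (dual o') r s" using Dn[OF RT[OF rs]] OMin by (simp add: opt_over_def)
      also have "\<dots> \<le> r s" by (rule assms(3))
      finally show "Min (r ` Post P s (\<sigma> s)) + (if \<exists>u\<in>Post P s (\<sigma> s). \<exists>v\<in>Post P s (\<sigma> s). r u \<noteq> r v then 1 else 0) \<le> r s"
        by (simp add: f_def)
    next
      fix s assume "s \<notin> T"
      have "x s \<le> ennreal (rew s) + (INF a\<in>{a. enabled P s a}. g s a)"
        using assms(4)[of s] En[OF \<open>s \<notin> T\<close>] OMin by (simp add: opt_over_def)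
      also have "\<dots> \<le> ennreal (rew s) + g s (\<sigma> s)"
        using str by (intro add_left_mono INF_lower) (simp add: strategies_def)
      finally show "x s \<le> ennreal (rew s) + (\<Sum>s'\<in>Post P s (\<sigma> s). ennreal (P s (\<sigma> s) s') * x s')"
        by (simp add: g_def)
    qed (simp_all add: f_def g_def)
    then have "x s0 \<le> (INF \<sigma>\<in>strategies P. exp_rew P T rew \<sigma> s0)" by (rule INF_greatest)
    then show ?thesis using OMin by (simp add: exp_opt_def opt_over_def)
  next
    case OMax
    have ex: "\<exists>a. enabled P s a \<and> (r s < \<infinity> \<longrightarrow> f s a \<le> r s)
               \<and> (r s = \<infinity> \<longrightarrow> s \<notin> T \<longrightarrow> x s \<le> ennreal (rew s) + g s a)" for s
    proof (cases "r s < \<infinity>")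
      case True
      obtain a where a: "a \<in> {a. enabled P s a}" "(INF a\<in>{a. enabled P s a}. f s a) = f s a"
        using INF_attained[OF _ Ane[of s], of "f s"] by auto
      have "f s a = D_op P T (dual o') r s" using Dn[OF RT[OF True]] OMax a(2) by (simp add: opt_over_def)
      then have "f s a \<le> r s" using assms(3)[of s] by simp
      then show ?thesis using a True by auto
    next
      case False
      obtain a where a: "a \<in> {a. enabled P s a}" "(SUP a\<in>{a. enabled P s a}. g s a) = g s a"
        using SUP_attained[OF _ Ane[of s], of "g s"] by auto
      have "x s \<le> ennreal (rew s) + g s a" if "s \<notin> T"
        using assms(4)[of s] En[OF that] OMax a(2) by (simp add: opt_over_def)
      then show ?thesis using a False by auto
    qed
    define \<sigma> where "\<sigma> s = (SOME a. enabled P s a \<and> (r s < \<infinity> \<longrightarrow> f s a \<le> r s)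
               \<and> (r s = \<infinity> \<longrightarrow> s \<notin> T \<longrightarrow> x s \<le> ennreal (rew s) + g s a))" for s
    have \<sigma>: "enabled P s (\<sigma> s) \<and> (r s < \<infinity> \<longrightarrow> f s (\<sigma> s) \<le> r s)
               \<and> (r s = \<infinity> \<longrightarrow> s \<notin> T \<longrightarrow> x s \<le> ennreal (rew s) + g s (\<sigma> s))" for s
      unfolding \<sigma>_def by (rule someI_ex[OF ex])
    have str: "\<sigma> \<in> strategies P" using \<sigma> by (simp add: strategies_def)
    have "x s0 \<le> exp_rew P T rew \<sigma> s0"
      by (rule core[OF mdp str rew RT _ H0 _ H3]) (use \<sigma> in \<open>simp_all add: f_def g_def\<close>)
    also have "\<dots> \<le> (SUP \<sigma>\<in>strategies P. exp_rew P T rew \<sigma> s0)" by (rule SUP_upper[OF str])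
    finally show ?thesis using OMax by (simp add: exp_opt_def opt_over_def)
  qed
qed

end
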